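(* Let $T_l$ be a $2m$ deck-shuffler IET and $x\in[0,1)$. Then $x$ is periodic for $T_l$ with minimal period $n$ if and only if the sequence $\mathcal{H}_l(x)$ is periodic with minimal period $n$.
   Context: A $2m$ deck-shuffler IET $T_l$ is the map $[0,1)\to[0,1)$ determined by a length vector $l$ giving a partition of $[0,1)$ into consecutive left-closed right-open intervals $A_1<\dots<A_m<B_1<\dots<B_m$ of positive lengths, with $T_l(x)=x+|B_1|+\dots+|B_i|$ for $x\in A_i$ and $T_l(x)=x-|A_i|-\dots-|A_m|$ for $x\in B_i$. Let $B=B_1\cup\dots\cup B_m$. The coding $\mathcal{H}_l:[0,1)\to\{0,1\}^{\mathbb{Z}_{\ge0}}$ is $\mathcal{H}_l(x)=(\chi_B(T_l^n x))_{n\ge0}$; a sequence $(s_k)$ is periodic with minimal period $n$ if $s_{k+n}=s_k$ for all $k$ and $n$ is the least positive such integer. *)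

theory Defs
  imports Complex_Main
begin

text \<open>Length vector l: indices 0..<m are |A_1|..|A_m|, indices m..<2m are |B_1|..|B_m|.
  pt l i is the left endpoint of the i-th interval (0-based) in the order A_1<...<A_m<B_1<...<B_m.\<close>

definition pt :: "(nat \<Rightarrow> real) \<Rightarrow> nat \<Rightarrow> real" where
  "pt l i = (\<Sum>j<i. l j)"

definition ds_valid :: "nat \<Rightarrow> (nat \<Rightarrow> real) \<Rightarrow> bool" where
  "ds_valid m l \<longleftrightarrow> m \<ge> 1 \<and> (\<forall>i<2*m. l i > 0) \<and> (\<Sum>i<2*m. l i) = 1"

definition inA :: "nat \<Rightarrow> (nat \<Rightarrow> real) \<Rightarrow> real \<Rightarrow> nat \<Rightarrow> bool" where
  "inA m l x i \<longleftrightarrow> i < m \<and> pt l i \<le> x \<and> x < pt l (Suc i)"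

definition inB :: "nat \<Rightarrow> (nat \<Rightarrow> real) \<Rightarrow> real \<Rightarrow> nat \<Rightarrow> bool" where
  "inB m l x i \<longleftrightarrow> i < m \<and> pt l (m + i) \<le> x \<and> x < pt l (Suc (m + i))"

definition ds_T :: "nat \<Rightarrow> (nat \<Rightarrow> real) \<Rightarrow> real \<Rightarrow> real" where
  "ds_T m l x =
    (if \<exists>i. inA m l x i then x + (\<Sum>j\<le>(THE i. inA m l x i). l (m + j))
     else if \<exists>i. inB m l x i then x - (\<Sum>j\<in>{(THE i. inB m l x i)..<m}. l j)
     else x)"

definition Bset :: "nat \<Rightarrow> (nat \<Rightarrow> real) \<Rightarrow> real set" where
  "Bset m l = {x. \<exists>i. inB m l x i}"

definition coding :: "nat \<Rightarrow> (nat \<Rightarrow> real) \<Rightarrow> real \<Rightarrow> nat \<Rightarrow> nat" where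
  "coding m l x = (\<lambda>n. if (ds_T m l ^^ n) x \<in> Bset m l then 1 else 0)"

definition periodic_pt_min :: "(real \<Rightarrow> real) \<Rightarrow> real \<Rightarrow> nat \<Rightarrow> bool" where
  "periodic_pt_min T x n \<longleftrightarrow> 0 < n \<and> (T ^^ n) x = x \<and> (\<forall>k. 0 < k \<and> k < n \<longrightarrow> (T ^^ k) x \<noteq> x)"

definition periodic_seq_min :: "(nat \<Rightarrow> 'a) \<Rightarrow> nat \<Rightarrow> bool" where
  "periodic_seq_min s n \<longleftrightarrow> 0 < n \<and> (\<forall>k. s (k + n) = s k)
     \<and> (\<forall>p. 0 < p \<and> p < n \<longrightarrow> \<not> (\<forall>k. s (k + p) = s k))"

end

theory Submission
  imports Defs
begin

lemma pt_Suc: "pt l (Suc i) = pt l i + l i" by (simp add: pt_def)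
lemma pt_0: "pt l 0 = 0" by (simp add: pt_def)

lemma pt_mono:
  assumes "ds_valid m l" "i \<le> j" "j \<le> 2*m" shows "pt l i \<le> pt l j"
  using assms(2,3)
proof (induction j)
  case 0 then show ?case by simp
next
  case (Suc j)
  show ?case
  proof (cases "i = Suc j")
    case True then show ?thesis by simp
  next
    case False
    then have "i \<le> j" using Suc by simp
    then have "pt l i \<le> pt l j" using Suc by simp
    moreover have "l j > 0" using assms(1) Suc.prems unfolding ds_valid_def by auto
    ultimately show ?thesis by (simp add: pt_Suc)
  qed
qed

lemma pt_2m: "ds_valid m l \<Longrightarrow> pt l (2*m) = 1" by (simp add: ds_valid_def pt_def)

lemma pt_shift: "pt l (m + k) = pt l m + (\<Sum>j<k. l (m+j))"
  by (induction k) (simp_all add: pt_Suc)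

lemma sumB: "i \<le> m \<Longrightarrow> (\<Sum>j\<in>{i..<m}. l j) = pt l m - pt l i"
proof -
  assume "i \<le> m"
  then have "(\<Sum>j\<in>{0..<i}. l j) + (\<Sum>j\<in>{i..<m}. l j) = (\<Sum>j\<in>{0..<m}. l j)"
    using sum.atLeastLessThan_concat[of 0 i m l] by simp
  then show ?thesis by (simp add: pt_def atLeast0LessThan)
qed

lemma idx_le:
  assumes "ds_valid m l" "pt l a \<le> x" "x \<le> y" "y < pt l (Suc b)" "a \<le> 2*m"
  shows "b \<ge> a"
proof (rule ccontr)
  assume "\<not> b \<ge> a"
  then have "Suc b \<le> a" by simp
  then have "pt l (Suc b) \<le> pt l a" using pt_mono[OF assms(1)] assms(5) by simp
  then show False using assms by simp
qed

lemma covering: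
  assumes "ds_valid m l" "0 \<le> x" "x < 1"
  shows "\<exists>k<2*m. pt l k \<le> x \<and> x < pt l (Suc k)"
proof -
  have "N \<le> 2*m \<longrightarrow> x < pt l N \<longrightarrow> (\<exists>k<N. pt l k \<le> x \<and> x < pt l (Suc k))" for N
  proof (induction N)
    case 0 then show ?case using assms(2) by (simp add: pt_0)
  next
    case (Suc N)
    show ?case
    proof (intro impI)
      assume a: "Suc N \<le> 2*m" "x < pt l (Suc N)"
      show "\<exists>k<Suc N. pt l k \<le> x \<and> x < pt l (Suc k)"
      proof (cases "x < pt l N")
        case True
        then obtain k where "k<N" "pt l k \<le> x \<and> x < pt l (Suc k)" using Suc a by auto
        then show ?thesis by (intro exI[of _ k]) auto
      next
        case False
        then show ?thesis using a by (intro exI[of _ N]) auto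
      qed
    qed
  qed
  then show ?thesis using pt_2m[OF assms(1)] assms(3) by auto
qed

lemma A_notB: "ds_valid m l \<Longrightarrow> inA m l x i \<Longrightarrow> \<not> inB m l x j"
  unfolding inA_def inB_def using idx_le[of m l "m+j" x x i] by auto

lemma A_uniq: "ds_valid m l \<Longrightarrow> inA m l x i \<Longrightarrow> inA m l x j \<Longrightarrow> j = i"
  unfolding inA_def using idx_le[of m l i x x j] idx_le[of m l j x x i] by auto

lemma B_uniq: "ds_valid m l \<Longrightarrow> inB m l x i \<Longrightarrow> inB m l x j \<Longrightarrow> j = i"
  unfolding inB_def using idx_le[of m l "m+i" x x "m+j"] idx_le[of m l "m+j" x x "m+i"] by auto

lemma T_A:
  assumes "ds_valid m l" "inA m l x i"
  shows "ds_T m l x = x + (\<Sum>j<Suc i. l (m+j))"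
proof -
  have "(THE i. inA m l x i) = i" using A_uniq[OF assms(1)] assms(2) by (intro the_equality) auto
  then show ?thesis using assms(2) unfolding ds_T_def by (auto simp: lessThan_Suc_atMost)
qed

lemma T_B:
  assumes "ds_valid m l" "inB m l x i"
  shows "ds_T m l x = x - (pt l m - pt l i)"
proof -
  have "(THE i. inB m l x i) = i" using B_uniq[OF assms(1)] assms(2) by (intro the_equality) auto
  moreover have "\<not> (\<exists>j. inA m l x j)" using A_notB[OF assms(1)] assms(2) by blast
  moreover have "i \<le> m" using assms(2) unfolding inB_def by simp
  ultimately show ?thesis using assms(2) sumB[of i m l] unfolding ds_T_def by auto
qed

lemma T_neither: "\<not>(\<exists>i. inA m l x i) \<Longrightarrow> \<not>(\<exists>i. inB m l x i) \<Longrightarrow> ds_T m l x = x"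
  unfolding ds_T_def by (simp only: if_False)

lemma T_range:
  assumes "ds_valid m l" "0 \<le> x" "x < 1"
  shows "0 \<le> ds_T m l x \<and> ds_T m l x < 1"
proof -
  obtain k where k: "k<2*m" "pt l k \<le> x" "x < pt l (Suc k)" using covering[OF assms] by auto
  note pm = pt_mono[OF assms(1)]
  show ?thesis
  proof (cases "k < m")
    case True
    then have A: "inA m l x k" using k unfolding inA_def by simp
    have e: "ds_T m l x = x + (pt l (m + Suc k) - pt l m)" using T_A[OF assms(1) A] pt_shift[of l m "Suc k"] by simp
    have "pt l m \<le> pt l (m + Suc k)" using pm[of m "m + Suc k"] True by simp
    moreover have "pt l (Suc k) \<le> pt l m" using pm[of "Suc k" m] True by simp
    moreover have "pt l (m + Suc k) \<le> pt l (2*m)" using pm[of "m + Suc k" "2*m"] True by simp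
    ultimately show ?thesis using e k assms pt_2m[OF assms(1)] by simp
  next
    case False
    define i where "i = k - m"
    have ki: "k = m + i" using False i_def by simp
    then have B: "inB m l x i" using k unfolding inB_def by simp
    have e: "ds_T m l x = x - (pt l m - pt l i)" using T_B[OF assms(1) B] .
    have "i \<le> m" using k ki by simp
    then have "pt l i \<le> pt l m" "pt l m \<le> pt l (m+i)" "pt l 0 \<le> pt l i"
      using pm[of i m] pm[of m "m+i"] pm[of 0 i] ki k by auto
    then show ?thesis using e k ki assms pt_0[of l] by simp
  qed
qed

lemma Bset_iff: "x \<in> Bset m l \<longleftrightarrow> (\<exists>i. inB m l x i)" by (simp add: Bset_def)

lemma T_mono:
  assumes "ds_valid m l" "0 \<le> x" "x < y" "y < 1" "x \<in> Bset m l \<longleftrightarrow> y \<in> Bset m l"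
  shows "ds_T m l x < ds_T m l y"
proof -
  obtain kx where kx: "kx<2*m" "pt l kx \<le> x" "x < pt l (Suc kx)" using covering[OF assms(1,2)] assms by auto
  have "0 \<le> y" using assms by simp
  then obtain ky where ky: "ky<2*m" "pt l ky \<le> y" "y < pt l (Suc ky)" using covering[OF assms(1) _ assms(4)] by auto
  have le: "kx \<le> ky" using idx_le[OF assms(1) kx(2), of y ky] assms ky kx by simp
  note pm = pt_mono[OF assms(1)]
  consider "ky < m" | "m \<le> kx" | "kx < m" "m \<le> ky" by linarith
  then show ?thesis
  proof cases
    case 1
    then have A: "inA m l x kx" "inA m l y ky" using kx ky le unfolding inA_def by auto
    have "pt l (m + Suc kx) \<le> pt l (m + Suc ky)" using pm[of "m + Suc kx" "m + Suc ky"] le 1 by simp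
    then show ?thesis using T_A[OF assms(1) A(1)] T_A[OF assms(1) A(2)] pt_shift[of l m "Suc kx"]
      pt_shift[of l m "Suc ky"] assms(3) by simp
  next
    case 2
    define i where "i = kx - m"
    define j where "j = ky - m"
    have ij: "kx = m + i" "ky = m + j" using 2 le i_def j_def by auto
    then have B: "inB m l x i" "inB m l y j" using kx ky unfolding inB_def by auto
    have "pt l i \<le> pt l j" using pm[of i j] ij le kx ky by simp
    then show ?thesis using T_B[OF assms(1) B(1)] T_B[OF assms(1) B(2)] assms(3) by simp
  next
    case 3
    define j where "j = ky - m"
    have ij: "ky = m + j" using 3 j_def by auto
    then have B: "inB m l y j" using ky unfolding inB_def by auto
    have A: "inA m l x kx" using kx 3 unfolding inA_def by auto
    have "x \<notin> Bset m l" using A_notB[OF assms(1) A] Bset_iff by blast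
    moreover have "y \<in> Bset m l" using B Bset_iff by blast
    ultimately show ?thesis using assms(5) by simp
  qed
qed

definition Fset :: "nat \<Rightarrow> (nat \<Rightarrow> real) \<Rightarrow> real set" where
  "Fset m l = (\<lambda>i. \<Sum>j<Suc i. l (m+j)) ` {..<m} \<union> (\<lambda>i. -(pt l m - pt l i)) ` {..<m} \<union> {0}"

lemma finite_Fset: "finite (Fset m l)" by (simp add: Fset_def)

lemma T_F: assumes "ds_valid m l" shows "ds_T m l x - x \<in> Fset m l"
proof (cases "\<exists>i. inA m l x i")
  case True
  then obtain i where i: "inA m l x i" by blast
  then have "i < m" by (simp add: inA_def)
  then show ?thesis using T_A[OF assms i] unfolding Fset_def by auto
next
  case False
  show ?thesis
  proof (cases "\<exists>i. inB m l x i")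
    case True
    then obtain i where i: "inB m l x i" by blast
    then have "i < m" by (simp add: inB_def)
    then show ?thesis using T_B[OF assms i] unfolding Fset_def by auto
  next
    case False2: False
    then show ?thesis using T_neither[OF False False2] unfolding Fset_def by auto
  qed
qed

fun transl :: "real set \<Rightarrow> nat \<Rightarrow> real set" where
  "transl F 0 = {0}"
| "transl F (Suc n) = (\<lambda>(a,b). a+b) ` (transl F n \<times> F)"

lemma finite_transl: "finite F \<Longrightarrow> finite (transl F n)"
  by (induction n) auto

lemma T_pow_F:
  assumes "ds_valid m l" shows "(ds_T m l ^^ p) z - z \<in> transl (Fset m l) p"
proof (induction p)
  case 0 then show ?case by simp
next
  case (Suc p)
  define w where "w = (ds_T m l ^^ p) z"
  have "(ds_T m l ^^ Suc p) z - z = (w - z) + (ds_T m l w - w)" by (simp add: w_def)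
  moreover have "(w - z, ds_T m l w - w) \<in> transl (Fset m l) p \<times> Fset m l"
    using Suc T_F[OF assms] w_def by auto
  ultimately show ?case by (simp only: transl.simps) (rule rev_image_eqI, auto)
qed

lemma orbit_range:
  assumes "ds_valid m l" "0 \<le> x" "x < 1"
  shows "0 \<le> (ds_T m l ^^ k) x \<and> (ds_T m l ^^ k) x < 1"
  by (induction k) (use assms T_range[OF assms(1)] in auto)

lemma coding_shift: "coding m l ((ds_T m l ^^ p) x) k = coding m l x (k+p)"
  by (simp add: coding_def funpow_add)

lemma mono_iter:
  assumes "ds_valid m l" "0 \<le> x" "x < y" "y < 1" "coding m l x = coding m l y"
  shows "(ds_T m l ^^ k) x < (ds_T m l ^^ k) y"
proof (induction k)
  case 0 then show ?case using assms by simp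
next
  case (Suc k)
  define a where "a = (ds_T m l ^^ k) x"
  define b where "b = (ds_T m l ^^ k) y"
  have ra: "0 \<le> a" "a < 1" using orbit_range[OF assms(1,2)] assms a_def by auto
  have rb: "0 \<le> b" "b < 1" using orbit_range[OF assms(1), of y] assms b_def by auto
  have "coding m l x k = coding m l y k" using assms(5) by simp
  then have "a \<in> Bset m l \<longleftrightarrow> b \<in> Bset m l" unfolding coding_def a_def b_def
    by (auto split: if_splits)
  then have "ds_T m l a < ds_T m l b" using T_mono[OF assms(1) ra(1) _ rb(2)] Suc a_def b_def by simp
  then show ?case by (simp add: a_def b_def)
qed

lemma seq_grow:
  fixes X :: "nat \<Rightarrow> real"
  assumes "finite S" "\<And>j. X (Suc j) - X j \<in> S" "\<And>j. X j < X (Suc j)"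
  shows "\<exists>j. X j \<ge> X 0 + 1"
proof -
  define D where "D = {d\<in>S. d > 0}"
  have fD: "finite D" using assms(1) D_def by simp
  have neD: "D \<noteq> {}" using assms(2,3)[of 0] D_def by auto
  define \<delta> where "\<delta> = Min D"
  have dpos: "\<delta> > 0" using Min_in[OF fD neD] D_def \<delta>_def by auto
  have dle: "\<delta> \<le> X (Suc j) - X j" for j
    using Min_le[OF fD, of "X (Suc j) - X j"] assms(2,3)[of j] D_def \<delta>_def by auto
  have grow: "X j \<ge> X 0 + real j * \<delta>" for j
  proof (induction j)
    case 0 then show ?case by simp
  next
    case (Suc j) then show ?case using dle[of j] by (simp add: algebra_simps)
  qed
  obtain n where "1 < real n * \<delta>" using reals_Archimedean3[OF dpos] by blast
  then show ?thesis using grow[of n] by (intro exI[of _ n]) simp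
qed

lemma key:
  assumes "ds_valid m l" "0 \<le> x" "x < 1" "coding m l ((ds_T m l ^^ p) x) = coding m l x"
  shows "(ds_T m l ^^ p) x = x"
proof (rule ccontr)
  assume ne: "(ds_T m l ^^ p) x \<noteq> x"
  define T where "T = ds_T m l"
  define y where "y = (T ^^ p) x"
  define X where "X j = (T ^^ (j*p)) x" for j
  have X1: "X (Suc j) = (T ^^ (j*p)) y" for j
  proof -
    have "Suc j * p = j*p + p" by simp
    then show ?thesis unfolding X_def y_def by (simp only: funpow_add o_apply)
  qed
  have X2: "X (Suc j) = (T ^^ p) (X j)" for j
  proof -
    have "Suc j * p = p + j*p" by simp
    then show ?thesis unfolding X_def by (simp only: funpow_add o_apply)
  qed
  have fin: "finite (transl (Fset m l) p)" using finite_transl finite_Fset by blast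
  have dif: "X (Suc j) - X j \<in> transl (Fset m l) p" for j
    using X2 T_pow_F[OF assms(1)] T_def by simp
  have rX: "0 \<le> X j \<and> X j < 1" for j using orbit_range[OF assms(1-3)] X_def T_def by simp
  have ry: "0 \<le> y" "y < 1" using orbit_range[OF assms(1-3), of p] y_def T_def by auto
  have cy: "coding m l y = coding m l x" using assms(4) y_def T_def by simp
  consider "x < y" | "y < x" using ne y_def T_def by fastforce
  then show False
  proof cases
    case 1
    have "X j < X (Suc j)" for j
      using mono_iter[OF assms(1,2) 1 ry(2) cy[symmetric], of "j*p"] X1 X_def T_def by simp
    then obtain j where "X j \<ge> X 0 + 1" using seq_grow[of _ X, OF fin dif] by blast
    then show False using rX[of j] rX[of 0] by simp
  next
    case 2
    have "X (Suc j) < X j" for j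
      using mono_iter[OF assms(1) ry(1) 2 assms(3) cy, of "j*p"] X1 X_def T_def by simp
    moreover have "finite (uminus ` transl (Fset m l) p)" using fin by simp
    moreover have "(- X (Suc j)) - (- X j) \<in> uminus ` transl (Fset m l) p" for j
      using dif[of j] by (intro rev_image_eqI[of "X (Suc j) - X j"]) auto
    ultimately obtain j where "- X j \<ge> - X 0 + 1" using seq_grow[of _ "\<lambda>j. - X j"] by force
    then show False using rX[of j] rX[of 0] by simp
  qed
qed

theorem lemma4:
  fixes m n :: nat and l :: "nat \<Rightarrow> real" and x :: real
  assumes "ds_valid m l" and "0 \<le> x" and "x < 1"
  shows "periodic_pt_min (ds_T m l) x n \<longleftrightarrow> periodic_seq_min (coding m l x) n"
proof -
  have per: "(\<forall>k. coding m l x (k + p) = coding m l x k) \<longleftrightarrow> (ds_T m l ^^ p) x = x" for p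
  proof
    assume "\<forall>k. coding m l x (k + p) = coding m l x k"
    then have "coding m l ((ds_T m l ^^ p) x) = coding m l x" using coding_shift by auto
    then show "(ds_T m l ^^ p) x = x" using key[OF assms] by blast
  next
    assume "(ds_T m l ^^ p) x = x"
    then show "\<forall>k. coding m l x (k + p) = coding m l x k" using coding_shift by metis
  qed
  show ?thesis unfolding periodic_pt_min_def periodic_seq_min_def using per by auto
qed

end
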